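(* For each $i=1,\dots,n$, the function $x\mapsto W^{z^\ast}(x,c_i)$ is continuously differentiable on $(0,\infty)$. Moreover, if $z^\ast(c_i)>0$, then the right second derivative at $z^\ast(c_i)$ is at least the left one: $\partial_{xx}W^{z^\ast}(z^\ast(c_i)^+,c_i)\ge\partial_{xx}W^{z^\ast}(z^\ast(c_i)^-,c_i)$.
   Context: Let $\mu\in\mathbb R$, $\sigma>0$, $q>0$, $\Lambda>0$ and $S=\{c_0,c_1,\dots,c_n\}$ with $0=c_0<c_1<\dots<c_n$. For $c\ge0$, $\theta_1(c)=\frac{c-\mu-\sqrt{(c-\mu)^2+2q\sigma^2}}{\sigma^2}<0$. Define recursively $W^{z^\ast}(x,c_0)=\frac{\Lambda}{q}(1-e^{\theta_1(0)x})$ for $x\ge0$, and for $i\ge1$: $G_i(y)=\Big(1-\frac{q}{c_i+\Lambda}W^{z^\ast}(y,c_{i-1})\Big)e^{-\theta_1(c_i)y}$ for $y\ge0$, $z^\ast(c_i)=\min\big(\arg\min_{y\ge0}G_i(y)\big)$, $a^\ast(c_i)=G_i(z^\ast(c_i))$, and $W^{z^\ast}(x,c_i)=W^{z^\ast}(x,c_{i-1})$ for $0\le x\le z^\ast(c_i)$, $W^{z^\ast}(x,c_i)=\frac{c_i+\Lambda}{q}\big(1-a^\ast(c_i)e^{\theta_1(c_i)x}\big)$ for $x>z^\ast(c_i)$. (This is the value of the optimal multi-threshold emission strategy.) *)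

theory Defs
  imports "HOL-Analysis.Analysis"
begin

definition theta1 :: "real \<Rightarrow> real \<Rightarrow> real \<Rightarrow> real \<Rightarrow> real" where
  "theta1 mu sg q cc = (cc - mu - sqrt ((cc - mu)^2 + 2 * q * sg^2)) / sg^2"

definition Gfun :: "real \<Rightarrow> real \<Rightarrow> real \<Rightarrow> real \<Rightarrow> (nat \<Rightarrow> real) \<Rightarrow> (real \<Rightarrow> real) \<Rightarrow> nat \<Rightarrow> real \<Rightarrow> real" where
  "Gfun mu sg q Lam c Wprev i y =
     (1 - q / (c i + Lam) * Wprev y) * exp (- theta1 mu sg q (c i) * y)"

definition argmin_min :: "(real \<Rightarrow> real) \<Rightarrow> real" where
  "argmin_min G = Inf {y. 0 \<le> y \<and> (\<forall>y'. 0 \<le> y' \<longrightarrow> G y \<le> G y')}"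

text \<open>Wz ... i = the function x \<mapsto> W^{z*}(x, c_i).\<close>
fun Wz :: "real \<Rightarrow> real \<Rightarrow> real \<Rightarrow> real \<Rightarrow> (nat \<Rightarrow> real) \<Rightarrow> nat \<Rightarrow> real \<Rightarrow> real" where
  "Wz mu sg q Lam c 0 = (\<lambda>x. Lam / q * (1 - exp (theta1 mu sg q 0 * x)))"
| "Wz mu sg q Lam c (Suc i) =
     (let G = Gfun mu sg q Lam c (Wz mu sg q Lam c i) (Suc i);
          z = argmin_min G;
          a = G z
      in (\<lambda>x. if x \<le> z then Wz mu sg q Lam c i x
              else (c (Suc i) + Lam) / q * (1 - a * exp (theta1 mu sg q (c (Suc i)) * x))))"

definition zstar :: "real \<Rightarrow> real \<Rightarrow> real \<Rightarrow> real \<Rightarrow> (nat \<Rightarrow> real) \<Rightarrow> nat \<Rightarrow> real" where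
  "zstar mu sg q Lam c i = argmin_min (Gfun mu sg q Lam c (Wz mu sg q Lam c (i - 1)) i)"

end

theory Submission
  imports Defs
begin

lemma theta1_neg: assumes "sg > 0" "q > 0" shows "theta1 mu sg q cc < 0"
proof -
  have "(cc - mu)^2 < (cc - mu)^2 + 2 * q * sg^2" using assms by simp
  hence "sqrt ((cc - mu)^2) < sqrt ((cc - mu)^2 + 2 * q * sg^2)" by (rule real_sqrt_less_mono)
  hence "cc - mu < sqrt ((cc - mu)^2 + 2 * q * sg^2)" by simp
  thus ?thesis unfolding theta1_def using assms by (simp add: divide_neg_pos)
qed

lemma deriv_glue:
  fixes f g :: "real \<Rightarrow> real"
  assumes f: "(f has_real_derivative d) (at z)" and g: "(g has_real_derivative d) (at z)" and fg: "f z = g z"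
  shows "((\<lambda>x. if x \<le> z then f x else g x) has_real_derivative d) (at z)"
proof -
  let ?h = "\<lambda>x. if x \<le> z then f x else g x"
  have fl: "((\<lambda>y. (f y - f z) / (y - z)) \<longlongrightarrow> d) (at_left z)"
    using f unfolding has_field_derivative_iff by (rule filterlim_mono) (auto simp: at_le)
  have gr: "((\<lambda>y. (g y - g z) / (y - z)) \<longlongrightarrow> d) (at_right z)"
    using g unfolding has_field_derivative_iff by (rule filterlim_mono) (auto simp: at_le)
  have "((\<lambda>y. (?h y - ?h z) / (y - z)) \<longlongrightarrow> d) (at_left z)"
    using fl by (rule Lim_transform_eventually) (auto simp: eventually_at_left_field intro!: exI[of _ "z - 1"])
  moreover have "((\<lambda>y. (?h y - ?h z) / (y - z)) \<longlongrightarrow> d) (at_right z)"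
    using gr by (rule Lim_transform_eventually) (auto simp: eventually_at_right_field fg intro!: exI[of _ "z + 1"])
  ultimately show ?thesis unfolding has_field_derivative_iff filterlim_at_split by simp
qed

lemma step_min:
  fixes W :: "real \<Rightarrow> real" and q C th M0 :: real
  assumes cont: "continuous_on UNIV W" and W0: "W 0 = 0" and bnd: "\<And>x. W x \<le> M0"
    and M0C: "M0 < C / q" and q: "q > 0" and C: "C > 0" and th: "th < 0"
  defines "G \<equiv> \<lambda>y. (1 - q / C * W y) * exp (- th * y)"
  shows "0 \<le> argmin_min G \<and> (\<forall>y\<ge>0. G (argmin_min G) \<le> G y)"
proof -
  define \<delta> where "\<delta> = 1 - q / C * M0"
  have dpos: "\<delta> > 0" using M0C q C by (simp add: \<delta>_def field_simps)
  have Glow: "G y \<ge> \<delta> * exp (- th * y)" for y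
  proof -
    have "q / C * W y \<le> q / C * M0" using bnd[of y] q C by (intro mult_left_mono) auto
    thus ?thesis unfolding G_def \<delta>_def by (intro mult_right_mono) auto
  qed
  define Y where "Y = (1 / \<delta>) / (- th)"
  have Y0: "Y \<ge> 0" using dpos th by (simp add: Y_def mult_pos_neg less_imp_le)
  have Gbig: "G y > 1" if "y > Y" for y
  proof -
    have "exp (- th * y) \<ge> 1 + (- th * y)" by (rule exp_ge_add_one_self)
    moreover have "- th * y > 1 / \<delta>"
    proof -
      have "(- th) * y > (- th) * Y" using that th by (intro mult_strict_left_mono) auto
      moreover have "(- th) * Y = 1 / \<delta>" using th by (simp add: Y_def)
      ultimately show ?thesis by simp
    qed
    ultimately have "\<delta> * exp (- th * y) > \<delta> * (1 + 1 / \<delta>)" using dpos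
      by (intro mult_strict_left_mono) auto
    also have "\<delta> * (1 + 1 / \<delta>) = \<delta> + 1" using dpos by (simp add: field_simps)
    finally show ?thesis using Glow[of y] dpos by linarith
  qed
  have Gc: "continuous_on UNIV G" unfolding G_def
    by (intro continuous_intros cont)
  obtain y0 where y0: "y0 \<in> {0..Y}" "\<forall>y\<in>{0..Y}. G y0 \<le> G y"
    using continuous_attains_inf[of "{0..Y}" G] Y0 continuous_on_subset[OF Gc] by auto
  have G0: "G 0 = 1" unfolding G_def using W0 by simp
  have y0min: "G y0 \<le> G y" if "y \<ge> 0" for y
  proof (cases "y \<le> Y")
    case True thus ?thesis using y0 that by auto
  next
    case False thus ?thesis using Gbig[of y] y0(2)[rule_format, of 0] Y0 G0 by auto
  qed
  define S where "S = {y. 0 \<le> y \<and> (\<forall>y'. 0 \<le> y' \<longrightarrow> G y \<le> G y')}"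
  have S_eq: "S = {y. 0 \<le> y} \<inter> {y. G y \<le> G y0}"
    unfolding S_def using y0min y0(1) by (auto intro: order_trans)
  have "closed S" unfolding S_eq
    by (intro closed_Int closed_Collect_le continuous_intros Gc[THEN continuous_on_subset] ) auto
  moreover have "y0 \<in> S" using y0min y0(1) by (auto simp: S_def)
  moreover have "bdd_below S" unfolding S_def by (rule bdd_belowI[of _ 0]) auto
  ultimately have "Inf S \<in> S" using closed_contains_Inf by blast
  moreover have "argmin_min G = Inf S" unfolding argmin_min_def S_def ..
  ultimately show ?thesis unfolding S_def by auto
qed

lemma step_props:
  fixes W D :: "real \<Rightarrow> real" and q C th M0 :: real
  assumes cont: "continuous_on UNIV W" and W0: "W 0 = 0" and bnd: "\<And>x. W x \<le> M0"
    and M0C: "M0 < C / q" and q: "q > 0" and C: "C > 0" and th: "th < 0"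
    and der: "\<And>x. x > 0 \<Longrightarrow> (W has_real_derivative D x) (at x)"
    and Dc: "continuous_on {0<..} D"
  assumes G_def: "G = (\<lambda>y. (1 - q / C * W y) * exp (- th * y))"
  assumes z_def: "z = argmin_min G"
  assumes a_def: "a = G z"
  assumes E_def: "E = (\<lambda>x. C / q * (1 - a * exp (th * x)))"
  assumes E'_def: "E' = (\<lambda>x. - (C / q * a * th * exp (th * x)))"
  shows "z \<ge> 0" "\<And>y. y \<ge> 0 \<Longrightarrow> G z \<le> G y" "E z = W z" "a > 0"
    "z > 0 \<Longrightarrow> D z = E' z"
    "\<And>x. (E has_real_derivative E' x) (at x)"
    "continuous_on UNIV (\<lambda>x. if x \<le> z then W x else E x)"
    "(\<lambda>x. if x \<le> z then W x else E x) 0 = 0"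
    "\<And>x. (\<lambda>x. if x \<le> z then W x else E x) x \<le> C / q"
    "\<exists>D. (\<forall>x>0. ((\<lambda>x. if x \<le> z then W x else E x) has_real_derivative D x) (at x))
          \<and> continuous_on {0<..} D"
proof -
  have mm: "0 \<le> z \<and> (\<forall>y\<ge>0. G z \<le> G y)"
    unfolding z_def G_def by (rule step_min[OF cont W0 bnd M0C q C th])
  thus z0: "z \<ge> 0" and zmin: "\<And>y. y \<ge> 0 \<Longrightarrow> G z \<le> G y" by auto
  have Wlt: "q / C * W x < 1" for x
  proof -
    have "q / C * W x \<le> q / C * M0" using bnd[of x] q C by (intro mult_left_mono) auto
    also have "\<dots> < 1" using M0C q C by (simp add: field_simps)
    finally show ?thesis .
  qed
  show apos: "a > 0" unfolding a_def G_def using Wlt[of z] by simp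
  show Ez: "E z = W z" unfolding E_def a_def G_def using q C
    by (simp add: field_simps exp_minus)
  show Eder: "\<And>x. (E has_real_derivative E' x) (at x)"
    unfolding E_def E'_def using q by (auto intro!: derivative_eq_intros)
  have foc: "D z = E' z" if zp: "z > 0"
  proof -
    define G' where "G' = (- (q / C * D z)) * exp (- th * z) + (1 - q / C * W z) * (exp (- th * z) * (- th))"
    have "(G has_real_derivative G') (at z)" unfolding G_def G'_def
      using q C by (auto intro!: derivative_eq_intros der zp)
    hence "G' = 0"
      by (rule DERIV_local_min[OF _ zp]) (auto intro!: zmin)
    moreover have "G' = exp (- th * z) * ((- (q / C * D z)) + (1 - q / C * W z) * (- th))"
      unfolding G'_def by (simp add: algebra_simps)
    ultimately have "(- (q / C * D z)) + (1 - q / C * W z) * (- th) = 0" by simp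
    hence "C * (- (q / C * D z) + (1 - q / C * W z) * (- th)) = 0" by simp
    hence "- q * D z - C * th + q * W z * th = 0" using C by (simp add: algebra_simps)
    hence "D z = - th * (C / q - W z)" using q by (simp add: field_simps)
    moreover have "E' z = - th * (C / q - W z)" unfolding E'_def a_def G_def using q C
      by (simp add: field_simps exp_minus)
    ultimately show ?thesis by simp
  qed
  thus "z > 0 \<Longrightarrow> D z = E' z" .
  let ?Wn = "\<lambda>x. if x \<le> z then W x else E x"
  have Ec: "continuous_on UNIV E" unfolding E_def by (intro continuous_intros)
  show "continuous_on UNIV ?Wn"
    by (rule continuous_on_cases_le[where h="\<lambda>x. x", OF continuous_on_subset[OF cont]
          continuous_on_subset[OF Ec]]) (auto simp: Ez)
  show "?Wn 0 = 0" using z0 W0 by simp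
  show "\<And>x. ?Wn x \<le> C / q"
  proof -
    fix x
    show "?Wn x \<le> C / q"
    proof (cases "x \<le> z")
      case True thus ?thesis using bnd[of x] M0C by simp
    next
      case False thus ?thesis unfolding E_def using apos q C by (simp add: field_simps)
    qed
  qed
  define Dn where "Dn = (\<lambda>x. if x \<le> z then D x else E' x)"
  have "(?Wn has_real_derivative Dn x) (at x)" if xp: "x > 0" for x
  proof -
    consider "x < z" | "x = z" | "x > z" by linarith
    thus ?thesis
    proof cases
      case 1
      have "(?Wn has_real_derivative D x) (at x)"
        using 1 by (intro has_field_derivative_transform_within_open[OF der[OF xp], of "{..<z}"]) auto
      thus ?thesis unfolding Dn_def using 1 by simp
    next
      case 2
      have "(?Wn has_real_derivative D z) (at z)"
        using 2 xp foc by (intro deriv_glue[where g=E] der) (auto simp: Ez Eder)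
      thus ?thesis using 2 by (simp add: Dn_def)
    next
      case 3
      have "(?Wn has_real_derivative E' x) (at x)"
        using 3 by (intro has_field_derivative_transform_within_open[OF Eder, of "{z<..}"]) auto
      thus ?thesis unfolding Dn_def using 3 by simp
    qed
  qed
  moreover have "continuous_on {0<..} Dn"
  proof (cases "z > 0")
    case False
    hence "\<And>x. x \<in> {0<..} \<Longrightarrow> E' x = Dn x" using z0 by (auto simp: Dn_def)
    moreover have "continuous_on {0<..} E'" unfolding E'_def by (intro continuous_intros)
    ultimately show ?thesis using continuous_on_cong by blast
  next
    case True
    have E'c: "continuous_on UNIV E'" unfolding E'_def by (intro continuous_intros)
    show ?thesis unfolding Dn_def
      by (rule continuous_on_cases_le[where h="\<lambda>x. x", OF continuous_on_subset[OF Dc]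
          continuous_on_subset[OF E'c]]) (auto simp: foc True)
  qed
  ultimately show "\<exists>D. (\<forall>x>0. (?Wn has_real_derivative D x) (at x)) \<and> continuous_on {0<..} D"
    by blast
qed

lemma aux_lin: "(X::real) * (1 - a * e) = X + (- X * a) * e" by algebra

lemma left_piece:
  "\<exists>\<epsilon>>0. \<exists>A B s. \<forall>x\<in>{x0-\<epsilon><..x0}. Wz mu sg q Lam c i x = A + B * exp (s * x)"
proof (induction i arbitrary: x0)
  case 0
  show ?case
    by (rule exI[of _ 1], simp, rule exI[of _ "Lam / q"], rule exI[of _ "- Lam / q"],
        rule exI[of _ "theta1 mu sg q 0"]) (auto simp: right_diff_distrib diff_divide_distrib)
next
  case (Suc i)
  define z where "z = argmin_min (Gfun mu sg q Lam c (Wz mu sg q Lam c i) (Suc i))"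
  define a where "a = Gfun mu sg q Lam c (Wz mu sg q Lam c i) (Suc i) z"
  have eq: "Wz mu sg q Lam c (Suc i) = (\<lambda>x. if x \<le> z then Wz mu sg q Lam c i x
     else (c (Suc i) + Lam) / q * (1 - a * exp (theta1 mu sg q (c (Suc i)) * x)))"
    unfolding a_def z_def by (simp add: Let_def)
  show ?case
  proof (cases "x0 \<le> z")
    case True
    obtain \<epsilon> A B s where "\<epsilon> > 0" "\<forall>x\<in>{x0-\<epsilon><..x0}. Wz mu sg q Lam c i x = A + B * exp (s * x)"
      using Suc.IH[of x0] by blast
    thus ?thesis using True unfolding eq by (intro exI[of _ \<epsilon>] exI[of _ A] exI[of _ B] exI[of _ s]) auto
  next
    case False
    have "\<forall>x\<in>{x0-(x0-z)<..x0}. Wz mu sg q Lam c (Suc i) x =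
       (c (Suc i) + Lam) / q + (- ((c (Suc i) + Lam) / q) * a) * exp (theta1 mu sg q (c (Suc i)) * x)"
      unfolding eq using aux_lin[of "(c (Suc i) + Lam) / q"] by auto
    moreover have "x0 - z > 0" using False by simp
    ultimately show ?thesis by blast
  qed
qed

lemma step_second:
  fixes W D :: "real \<Rightarrow> real" and q C th M0 A B s \<epsilon> :: real
  assumes cont: "continuous_on UNIV W" and W0: "W 0 = 0" and bnd: "\<And>x. W x \<le> M0"
    and M0C: "M0 < C / q" and q: "q > 0" and C: "C > 0" and th: "th < 0"
    and der: "\<And>x. x > 0 \<Longrightarrow> (W has_real_derivative D x) (at x)"
    and Dc: "continuous_on {0<..} D"
  assumes G_def: "G = (\<lambda>y. (1 - q / C * W y) * exp (- th * y))"
  assumes z_def: "z = argmin_min G"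
  assumes a_def: "a = G z"
  assumes Wn_def: "Wn = (\<lambda>x. if x \<le> z then W x else C / q * (1 - a * exp (th * x)))"
  assumes zp: "z > 0" and ep: "\<epsilon> > 0"
    and piece: "\<And>x. x \<in> {z-\<epsilon><..z} \<Longrightarrow> W x = A + B * exp (s * x)"
  shows "\<exists>L R. (deriv (deriv Wn) \<longlongrightarrow> R) (at_right z)
               \<and> (deriv (deriv Wn) \<longlongrightarrow> L) (at_left z) \<and> R \<ge> L"
proof -
  define E where "E \<equiv> \<lambda>x. C / q * (1 - a * exp (th * x))"
  define E' where "E' \<equiv> \<lambda>x. - (C / q * a * th * exp (th * x))"
  define E'' where "E'' \<equiv> \<lambda>x. - (C / q * a * th * (exp (th * x) * th))"
  note sp = step_props[OF cont W0 bnd M0C q C th der Dc G_def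
      z_def a_def meta_eq_to_obj_eq[OF E_def]
      meta_eq_to_obj_eq[OF E'_def]]
  have Wn_eq: "Wn = (\<lambda>x. if x \<le> z then W x else E x)" unfolding Wn_def E_def ..
  have Eder: "(E has_real_derivative E' x) (at x)" for x by (rule sp(6))
  have E'der: "(E' has_real_derivative E'' x) (at x)" for x
    unfolding E'_def E''_def using q by (auto intro!: derivative_eq_intros)
  have dWr: "deriv Wn y = E' y" if "y > z" for y
  proof -
    have "(Wn has_real_derivative E' y) (at y)" unfolding Wn_eq
      using that by (intro has_field_derivative_transform_within_open[OF Eder, of "{z<..}"]) auto
    thus ?thesis by (rule DERIV_imp_deriv)
  qed
  have ddWr: "deriv (deriv Wn) y = E'' y" if "y > z" for y
  proof -
    have "(deriv Wn has_real_derivative E'' y) (at y)"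
      using that by (intro has_field_derivative_transform_within_open[OF E'der, of "{z<..}"])
        (auto simp: dWr)
    thus ?thesis by (rule DERIV_imp_deriv)
  qed
  have E''c: "isCont E'' x" for x unfolding E''_def by (intro continuous_intros)
  have limR: "(deriv (deriv Wn) \<longlongrightarrow> E'' z) (at_right z)"
  proof -
    have "(E'' \<longlongrightarrow> E'' z) (at_right z)"
      using E''c[of z] by (simp add: isCont_def filterlim_at_split)
    thus ?thesis
      by (rule Lim_transform_eventually)
         (auto simp: eventually_at_right_field ddWr intro!: exI[of _ "z + 1"])
  qed
  define e where "e = min \<epsilon> z"
  have e0: "e > 0" using ep zp by (simp add: e_def)
  define P where "P \<equiv> \<lambda>x. A + B * exp (s * x)"
  define P' where "P' \<equiv> \<lambda>x. B * (exp (s * x) * s)"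
  define P'' where "P'' \<equiv> \<lambda>x. B * (exp (s * x) * s * s)"
  have Pder: "(P has_real_derivative P' x) (at x)" for x
    unfolding P_def P'_def by (auto intro!: derivative_eq_intros)
  have P'der: "(P' has_real_derivative P'' x) (at x)" for x
    unfolding P'_def P''_def by (auto intro!: derivative_eq_intros)
  have WP: "W x = P x" if "x \<in> {z-e<..z}" for x
    using piece[of x] that by (auto simp: P_def e_def)
  have dWl: "deriv Wn y = P' y" if "y \<in> {z-e<..<z}" for y
  proof -
    have "(Wn has_real_derivative P' y) (at y)" unfolding Wn_eq
      using that by (intro has_field_derivative_transform_within_open[OF Pder, of "{z-e<..<z}"])
        (auto simp: WP)
    thus ?thesis by (rule DERIV_imp_deriv)
  qed
  have ddWl: "deriv (deriv Wn) y = P'' y" if "y \<in> {z-e<..<z}" for y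
  proof -
    have "(deriv Wn has_real_derivative P'' y) (at y)"
      using that by (intro has_field_derivative_transform_within_open[OF P'der, of "{z-e<..<z}"])
        (auto simp: dWl)
    thus ?thesis by (rule DERIV_imp_deriv)
  qed
  have P''c: "isCont P'' x" for x unfolding P''_def by (intro continuous_intros)
  have P'c: "isCont P' x" for x unfolding P'_def by (intro continuous_intros)
  have limL: "(deriv (deriv Wn) \<longlongrightarrow> P'' z) (at_left z)"
  proof -
    have "(P'' \<longlongrightarrow> P'' z) (at_left z)"
      using P''c[of z] by (simp add: isCont_def filterlim_at_split)
    thus ?thesis
      by (rule Lim_transform_eventually)
         (auto simp: eventually_at_left_field ddWl intro!: exI[of _ "z - e"] e0)
  qed
  have DP: "D y = P' y" if "y \<in> {z-e<..<z}" for y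
  proof -
    have yp: "y > 0" using that by (auto simp: e_def)
    have "(W has_real_derivative P' y) (at y)"
      using that by (intro has_field_derivative_transform_within_open[OF Pder, of "{z-e<..<z}"])
        (auto simp: WP)
    thus ?thesis using der[OF yp] by (rule DERIV_unique[rotated])
  qed
  have DPz: "D z = P' z"
  proof -
    have "isCont D z" using Dc zp by (simp add: continuous_on_eq_continuous_at)
    hence "(D \<longlongrightarrow> D z) (at_left z)" by (simp add: isCont_def filterlim_at_split)
    moreover have "(D \<longlongrightarrow> P' z) (at_left z)"
    proof -
      have "(P' \<longlongrightarrow> P' z) (at_left z)"
        using P'c[of z] by (simp add: isCont_def filterlim_at_split)
      thus ?thesis
        by (rule Lim_transform_eventually)
           (auto simp: eventually_at_left_field DP intro!: exI[of _ "z - e"] e0)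
    qed
    ultimately show ?thesis using tendsto_unique[OF trivial_limit_at_left_real] by blast
  qed
  have WPz: "W z = P z" using WP e0 by simp
  define K where "K = 1 - q / C * W z"
  have aK: "a * exp (th * z) = K" unfolding a_def G_def K_def by (simp add: exp_minus)
  have E'z: "E' z = - (C / q) * th * K" unfolding E'_def using aK[symmetric] by simp
  have E''z: "E'' z = - (C / q) * th * th * K" unfolding E''_def using aK[symmetric] by simp
  have P'z: "q / C * P' z = - th * K"
  proof -
    have "D z = E' z" using sp(5) zp by auto
    thus ?thesis using DPz E'z q C by (simp add: field_simps)
  qed
  \<comment> \<open>second order condition\<close>
  define H where "H \<equiv> \<lambda>x. (1 - q / C * P x) * exp (- th * x)"
  define H' where "H' \<equiv> \<lambda>x. (- (q / C * P' x) - th * (1 - q / C * P x)) * exp (- th * x)"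
  define H'' where "H'' \<equiv> \<lambda>x. (- (q / C * P'' x) + 2 * th * (q / C * P' x)
       + th * th * (1 - q / C * P x)) * exp (- th * x)"
  have Hder: "(H has_real_derivative H' x) (at x)" for x
    unfolding H_def H'_def
    by (rule derivative_eq_intros Pder refl | simp)+ (simp add: algebra_simps)
  have H'der: "(H' has_real_derivative H'' x) (at x)" for x
    unfolding H'_def H''_def
    by (rule derivative_eq_intros Pder P'der refl | simp)+ (simp add: algebra_simps)
  have H''c: "isCont H'' x" for x unfolding H''_def P_def P'_def P''_def by (intro continuous_intros)
  have H'z: "H' z = 0" unfolding H'_def using P'z WPz K_def by simp
  have Hmin: "H z \<le> H y" if "y \<in> {z-e<..z}" for y
  proof -
    have "y \<ge> 0" using that by (auto simp: e_def)
    hence "G z \<le> G y" using sp(2) by auto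
    moreover have "G y = H y" "G z = H z" using WP[OF that] WPz unfolding G_def H_def by auto
    ultimately show ?thesis by simp
  qed
  have H''z: "H'' z \<ge> 0"
  proof (rule ccontr)
    assume "\<not> H'' z \<ge> 0"
    hence neg: "H'' z < 0" by simp
    have "\<forall>\<^sub>F y in at z. H'' y < 0"
      using order_tendstoD(2)[OF H''c[of z, unfolded isCont_def] neg] .
    then obtain d where d: "d > 0" "\<And>y. y \<noteq> z \<Longrightarrow> dist y z < d \<Longrightarrow> H'' y < 0"
      unfolding eventually_at by blast
    define y1 where "y1 = z - min d e / 2"
    have y1: "y1 < z" "y1 > z - e" "y1 > z - d" using d e0 by (auto simp: y1_def)
    obtain \<xi> where xi: "y1 < \<xi>" "\<xi> < z" "H z - H y1 = (z - y1) * H' \<xi>"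
      using MVT2[OF y1(1), of H H'] Hder by blast
    obtain \<eta> where eta: "\<xi> < \<eta>" "\<eta> < z" "H' z - H' \<xi> = (z - \<xi>) * H'' \<eta>"
      using MVT2[OF xi(2), of H' H''] H'der by blast
    have "H'' \<eta> < 0" using d(2)[of \<eta>] eta xi y1 by (auto simp: dist_real_def)
    hence "(z - \<xi>) * H'' \<eta> < 0" using eta by (simp add: mult_pos_neg)
    hence "H' \<xi> > 0" using eta(3) H'z by simp
    hence "H z - H y1 > 0" using xi y1 by simp
    moreover have "H z \<le> H y1" using Hmin[of y1] y1 by simp
    ultimately show False by simp
  qed
  have k1: "1 - q / C * P z = K" using WPz K_def by simp
  have "H'' z = (- (q / C * P'' z) + 2 * th * (- th * K) + th * th * K) * exp (- th * z)"
    unfolding H''_def using P'z k1 by simp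
  also have "\<dots> = (- (q / C * P'' z) - th * th * K) * exp (- th * z)" by (simp add: algebra_simps)
  finally have "H'' z = (- (q / C * P'' z) - th * th * K) * exp (- th * z)" .
  hence "- (q / C * P'' z) - th * th * K \<ge> 0" using H''z
    by (simp add: zero_le_mult_iff)
  hence "P'' z \<le> E'' z" unfolding E''z using q C by (simp add: field_simps)
  thus ?thesis using limL limR by blast
qed

lemma invariants:
  fixes mu sg q Lam :: real and c :: "nat \<Rightarrow> real" and n i :: nat
  assumes sg: "sg > 0" and q: "q > 0" and Lam: "Lam > 0"
    and c0: "c 0 = 0" and inc: "\<And>j. j < n \<Longrightarrow> c j < c (Suc j)"
  shows "i \<le> n \<Longrightarrow> continuous_on UNIV (Wz mu sg q Lam c i) \<and> Wz mu sg q Lam c i 0 = 0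
     \<and> (\<forall>x. Wz mu sg q Lam c i x \<le> (c i + Lam) / q)
     \<and> (\<exists>D. (\<forall>x>0. (Wz mu sg q Lam c i has_real_derivative D x) (at x)) \<and> continuous_on {0<..} D)
     \<and> c i \<ge> 0"
proof (induction i)
  case 0
  have d1: "(Wz mu sg q Lam c 0 has_real_derivative
      (- (Lam / q * (exp (theta1 mu sg q 0 * x) * theta1 mu sg q 0)))) (at x)" for x
    using q by (auto intro!: derivative_eq_intros)
  have d2: "continuous_on {0<..} (\<lambda>x. - (Lam / q * (exp (theta1 mu sg q 0 * x) * theta1 mu sg q 0)))"
    by (intro continuous_intros)
  have d3: "continuous_on UNIV (Wz mu sg q Lam c 0)" using q by (simp, intro continuous_intros, simp)
  have d4: "Wz mu sg q Lam c 0 x \<le> (c 0 + Lam) / q" for x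
    using q Lam c0 by (simp add: mult_le_cancel_left1 divide_le_cancel)
  have d5: "\<exists>D. (\<forall>x>0. (Wz mu sg q Lam c 0 has_real_derivative D x) (at x)) \<and> continuous_on {0<..} D"
    using d1 d2 by (intro exI[of _ "\<lambda>x. - (Lam / q * (exp (theta1 mu sg q 0 * x) * theta1 mu sg q 0))"]) auto
  show ?case by (intro conjI d3 d5 allI d4) (simp_all add: c0)
next
  case (Suc i)
  hence iln: "i < n" by simp
  hence IH: "continuous_on UNIV (Wz mu sg q Lam c i)" "Wz mu sg q Lam c i 0 = 0"
     "\<And>x. Wz mu sg q Lam c i x \<le> (c i + Lam) / q"
     "\<exists>D. (\<forall>x>0. (Wz mu sg q Lam c i has_real_derivative D x) (at x)) \<and> continuous_on {0<..} D"
     "c i \<ge> 0"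
    using Suc.IH by auto
  obtain D where D: "\<And>x. x > 0 \<Longrightarrow> (Wz mu sg q Lam c i has_real_derivative D x) (at x)"
    "continuous_on {0<..} D" using IH(4) by blast
  have cS: "c i < c (Suc i)" using inc[OF iln] .
  have M0C: "(c i + Lam) / q < (c (Suc i) + Lam) / q" using cS q by (simp add: divide_strict_right_mono)
  have CP: "c (Suc i) + Lam > 0" using cS IH(5) Lam by linarith
  have th: "theta1 mu sg q (c (Suc i)) < 0" by (rule theta1_neg[OF sg q])
  define G where "G = Gfun mu sg q Lam c (Wz mu sg q Lam c i) (Suc i)"
  have Geq: "G = (\<lambda>y. (1 - q / (c (Suc i) + Lam) * Wz mu sg q Lam c i y) * exp (- theta1 mu sg q (c (Suc i)) * y))"
    unfolding G_def by (rule ext) (simp add: Gfun_def)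
  define z where "z = argmin_min G"
  define a where "a = G z"
  note sp = step_props[OF IH(1,2,3) M0C q CP th D Geq z_def a_def refl refl]
  have eq: "Wz mu sg q Lam c (Suc i) = (\<lambda>x. if x \<le> z then Wz mu sg q Lam c i x
     else (c (Suc i) + Lam) / q * (1 - a * exp (theta1 mu sg q (c (Suc i)) * x)))"
    unfolding a_def z_def G_def by (simp add: Let_def)
  show ?case unfolding eq using sp(7,8,9,10) CP IH(5) cS by auto
qed

theorem mainTheorem13:
  fixes mu sg q Lam :: real and c :: "nat \<Rightarrow> real" and n i :: nat
  assumes "sg > 0" and "q > 0" and "Lam > 0"
    and "c 0 = 0" and "\<And>j. j < n \<Longrightarrow> c j < c (Suc j)"
    and "1 \<le> i" and "i \<le> n"
  shows "Wz mu sg q Lam c i C1_differentiable_on {0<..}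
     \<and> (zstar mu sg q Lam c i > 0 \<longrightarrow>
          (\<exists>L R. (deriv (deriv (Wz mu sg q Lam c i)) \<longlongrightarrow> R) (at_right (zstar mu sg q Lam c i))
               \<and> (deriv (deriv (Wz mu sg q Lam c i)) \<longlongrightarrow> L) (at_left (zstar mu sg q Lam c i))
               \<and> R \<ge> L))"
proof -
  note sg = assms(1) and q = assms(2) and Lam = assms(3) and c0 = assms(4) and inc = assms(5)
  obtain j where ij: "i = Suc j" using assms(6) by (cases i) auto
  have jn: "j < n" using assms(7) ij by simp
  have inv_i: "\<exists>D. (\<forall>x>0. (Wz mu sg q Lam c i has_real_derivative D x) (at x)) \<and> continuous_on {0<..} D"
    using invariants[OF sg q Lam c0 inc assms(7)] by blast
  have C1: "Wz mu sg q Lam c i C1_differentiable_on {0<..}"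
    using inv_i unfolding C1_differentiable_on_def has_real_derivative_iff_has_vector_derivative by auto
  have IH: "continuous_on UNIV (Wz mu sg q Lam c j)" "Wz mu sg q Lam c j 0 = 0"
     "\<And>x. Wz mu sg q Lam c j x \<le> (c j + Lam) / q"
     "\<exists>D. (\<forall>x>0. (Wz mu sg q Lam c j has_real_derivative D x) (at x)) \<and> continuous_on {0<..} D"
     "c j \<ge> 0"
    using invariants[OF sg q Lam c0 inc, of j] jn by auto
  obtain D where D: "\<And>x. x > 0 \<Longrightarrow> (Wz mu sg q Lam c j has_real_derivative D x) (at x)"
    "continuous_on {0<..} D" using IH(4) by blast
  have cS: "c j < c (Suc j)" using inc[OF jn] .
  have M0C: "(c j + Lam) / q < (c (Suc j) + Lam) / q" using cS q by (simp add: divide_strict_right_mono)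
  have CP: "c (Suc j) + Lam > 0" using cS IH(5) Lam by linarith
  have th: "theta1 mu sg q (c (Suc j)) < 0" by (rule theta1_neg[OF sg q])
  define G where "G = Gfun mu sg q Lam c (Wz mu sg q Lam c j) (Suc j)"
  have Geq: "G = (\<lambda>y. (1 - q / (c (Suc j) + Lam) * Wz mu sg q Lam c j y) * exp (- theta1 mu sg q (c (Suc j)) * y))"
    unfolding G_def by (rule ext) (simp add: Gfun_def)
  define z where "z = argmin_min G"
  define a where "a = G z"
  have zz: "zstar mu sg q Lam c i = z" unfolding zstar_def z_def G_def ij by simp
  have eq: "Wz mu sg q Lam c i = (\<lambda>x. if x \<le> z then Wz mu sg q Lam c j x
     else (c (Suc j) + Lam) / q * (1 - a * exp (theta1 mu sg q (c (Suc j)) * x)))"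
    unfolding a_def z_def G_def ij by (simp add: Let_def)
  have second: "\<exists>L R. (deriv (deriv (Wz mu sg q Lam c i)) \<longlongrightarrow> R) (at_right z)
               \<and> (deriv (deriv (Wz mu sg q Lam c i)) \<longlongrightarrow> L) (at_left z) \<and> R \<ge> L"
    if zp: "z > 0"
  proof -
    obtain \<epsilon> A B s where ep: "\<epsilon> > 0"
      and pc: "\<forall>x\<in>{z-\<epsilon><..z}. Wz mu sg q Lam c j x = A + B * exp (s * x)"
      using left_piece[of z mu sg q Lam c j] by blast
    show ?thesis
      by (rule step_second[OF IH(1,2,3) M0C q CP th D Geq z_def a_def eq zp ep]) (use pc in auto)
  qed
  show ?thesis using C1 second unfolding zz by blast
qed
end
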